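(* Let $G$ be a finite group and let $S=\bigoplus_{g\in G}S_g$ be an epsilon-strongly $G$-graded ring with principal component $R=S_e$. If $R$ is left (respectively right) noetherian, then $S$ is left (respectively right) noetherian.
   Context: All rings are associative with multiplicative identity $1\neq 0$. A ring $S$ is $G$-graded if $S=\bigoplus_{g\in G}S_g$ for additive subgroups $S_g$ with $S_gS_h\subseteq S_{gh}$ for all $g,h\in G$; $S_e$ is the principal component. $S$ is epsilon-strongly $G$-graded if (a) $S_gS_{g^{-1}}S_g=S_g$ for all $g\in G$, and (b) for each $g\in G$ the ideal $S_gS_{g^{-1}}$ of $S_e$ has a multiplicative identity. *)

theory Defs
  imports Main "HOL-Algebra.Group"
begin

definition add_subgroup :: "'a::ring_1 set \<Rightarrow> bool" where
  "add_subgroup A \<longleftrightarrow> 0 \<in> A \<and> (\<forall>x\<in>A. \<forall>y\<in>A. x + y \<in> A) \<and> (\<forall>x\<in>A. - x \<in> A)"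

definition ring_set_mult :: "'a::ring_1 set \<Rightarrow> 'a set \<Rightarrow> 'a set" where
  "ring_set_mult A B = {(\<Sum>i<n. a i * b i) | (n::nat) a b. \<forall>i<n. a i \<in> A \<and> b i \<in> B}"

definition graded_ring :: "('g, 'b) monoid_scheme \<Rightarrow> ('g \<Rightarrow> 'a::ring_1 set) \<Rightarrow> bool" where
  "graded_ring G S \<longleftrightarrow>
     (\<forall>g\<in>carrier G. add_subgroup (S g)) \<and>
     (\<forall>g\<in>carrier G. \<forall>h\<in>carrier G. \<forall>x\<in>S g. \<forall>y\<in>S h. x * y \<in> S (g \<otimes>\<^bsub>G\<^esub> h)) \<and>
     (\<forall>x::'a. \<exists>!f::'g \<Rightarrow> 'a. (\<forall>g. g \<notin> carrier G \<longrightarrow> f g = 0) \<and>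
                         finite {g. f g \<noteq> 0} \<and>
                         (\<forall>g\<in>carrier G. f g \<in> S g) \<and>
                         x = (\<Sum>g\<in>{g. f g \<noteq> 0}. f g))"

definition epsilon_strongly_graded :: "('g, 'b) monoid_scheme \<Rightarrow> ('g \<Rightarrow> 'a::ring_1 set) \<Rightarrow> bool" where
  "epsilon_strongly_graded G S \<longleftrightarrow> graded_ring G S \<and>
     (\<forall>g\<in>carrier G. ring_set_mult (ring_set_mult (S g) (S (inv\<^bsub>G\<^esub> g))) (S g) = S g) \<and>
     (\<forall>g\<in>carrier G. \<exists>\<epsilon>\<in>ring_set_mult (S g) (S (inv\<^bsub>G\<^esub> g)).
         \<forall>x\<in>ring_set_mult (S g) (S (inv\<^bsub>G\<^esub> g)). \<epsilon> * x = x \<and> x * \<epsilon> = x)"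

definition left_ideal_of :: "'a::ring_1 set \<Rightarrow> 'a set \<Rightarrow> bool" where
  "left_ideal_of R I \<longleftrightarrow> I \<subseteq> R \<and> add_subgroup I \<and> (\<forall>r\<in>R. \<forall>x\<in>I. r * x \<in> I)"

definition right_ideal_of :: "'a::ring_1 set \<Rightarrow> 'a set \<Rightarrow> bool" where
  "right_ideal_of R I \<longleftrightarrow> I \<subseteq> R \<and> add_subgroup I \<and> (\<forall>r\<in>R. \<forall>x\<in>I. x * r \<in> I)"

definition left_noetherian :: "'a::ring_1 set \<Rightarrow> bool" where
  "left_noetherian R \<longleftrightarrow> (\<forall>I::nat \<Rightarrow> 'a set. (\<forall>n. left_ideal_of R (I n)) \<longrightarrow>
      (\<forall>n. I n \<subseteq> I (Suc n)) \<longrightarrow> (\<exists>N. \<forall>n\<ge>N. I n = I N))"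

definition right_noetherian :: "'a::ring_1 set \<Rightarrow> bool" where
  "right_noetherian R \<longleftrightarrow> (\<forall>I::nat \<Rightarrow> 'a set. (\<forall>n. right_ideal_of R (I n)) \<longrightarrow>
      (\<forall>n. I n \<subseteq> I (Suc n)) \<longrightarrow> (\<exists>N. \<forall>n\<ge>N. I n = I N))"

end

theory Submission
  imports Defs
begin

definition Lj :: "'a::ring_1 set \<Rightarrow> (nat \<Rightarrow> 'a) \<Rightarrow> nat \<Rightarrow> 'a set \<Rightarrow> 'a set" where
  "Lj R w j I = {r\<in>R. \<exists>c. (\<forall>i<j. c i \<in> R) \<and> r * w j + (\<Sum>i<j. c i * w i) \<in> I}"

lemma Lj_mono: "I \<subseteq> J \<Longrightarrow> Lj R w j I \<subseteq> Lj R w j J"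
  unfolding Lj_def by blast

lemma Lj_ideal:
  assumes R0: "0 \<in> R" and Radd: "\<forall>x\<in>R. \<forall>y\<in>R. x+y\<in>R" and Rneg: "\<forall>x\<in>R. -x\<in>R"
    and Rmul: "\<forall>x\<in>R. \<forall>y\<in>R. x*y\<in>R"
    and I: "left_ideal_of UNIV I"
  shows "left_ideal_of R (Lj R w j I)"
proof -
  have I0: "0 \<in> I" and Iadd: "\<forall>x\<in>I. \<forall>y\<in>I. x+y\<in>I" and Ineg: "\<forall>x\<in>I. -x\<in>I"
    and Imul: "\<forall>r. \<forall>x\<in>I. r*x\<in>I"
    using I unfolding left_ideal_of_def add_subgroup_def by auto
  have a: "0 \<in> Lj R w j I" unfolding Lj_def
    using R0 I0 by (auto intro!: exI[of _ "\<lambda>_. 0"])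
  have b: "x + y \<in> Lj R w j I" if hx: "x \<in> Lj R w j I" and hy: "y \<in> Lj R w j I" for x y
  proof -
    obtain c where c: "\<forall>i<j. c i \<in> R" "x * w j + (\<Sum>i<j. c i * w i) \<in> I" "x \<in> R"
      using hx unfolding Lj_def by auto
    obtain d where d: "\<forall>i<j. d i \<in> R" "y * w j + (\<Sum>i<j. d i * w i) \<in> I" "y \<in> R"
      using hy unfolding Lj_def by auto
    have "(x+y) * w j + (\<Sum>i<j. (c i + d i) * w i) =
        (x * w j + (\<Sum>i<j. c i * w i)) + (y * w j + (\<Sum>i<j. d i * w i))"
      by (simp add: algebra_simps sum.distrib)
    then show ?thesis unfolding Lj_def using c d Radd Iadd
      by (auto intro!: exI[of _ "\<lambda>i. c i + d i"])
  qed
  have c: "- x \<in> Lj R w j I" if hx: "x \<in> Lj R w j I" for x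
  proof -
    obtain c where c: "\<forall>i<j. c i \<in> R" "x * w j + (\<Sum>i<j. c i * w i) \<in> I" "x \<in> R"
      using hx unfolding Lj_def by auto
    have "(-x) * w j + (\<Sum>i<j. (- c i) * w i) = - (x * w j + (\<Sum>i<j. c i * w i))"
      by (simp add: algebra_simps sum_negf)
    then have "(-x) * w j + (\<Sum>i<j. (- c i) * w i) \<in> I" using c Ineg by metis
    then show ?thesis unfolding Lj_def using c Rneg
      by (intro CollectI conjI exI[of _ "\<lambda>i. - c i"]) auto
  qed
  have d: "r * x \<in> Lj R w j I" if hr: "r \<in> R" and hx: "x \<in> Lj R w j I" for r x
  proof -
    obtain c where c: "\<forall>i<j. c i \<in> R" "x * w j + (\<Sum>i<j. c i * w i) \<in> I" "x \<in> R"
      using hx unfolding Lj_def by auto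
    have "(r*x) * w j + (\<Sum>i<j. (r * c i) * w i) = r * (x * w j + (\<Sum>i<j. c i * w i))"
      by (simp add: algebra_simps sum_distrib_left)
    then show ?thesis unfolding Lj_def using c Rmul Imul hr
      by (auto intro!: exI[of _ "\<lambda>i. r * c i"])
  qed
  show ?thesis unfolding left_ideal_of_def add_subgroup_def
    using a b c d by (auto simp: Lj_def)
qed

lemma Lj_reflect:
  assumes Radd: "\<forall>x\<in>R. \<forall>y\<in>R. x+y\<in>R" and Rneg: "\<forall>x\<in>R. -x\<in>R"
    and A: "add_subgroup A" and B: "add_subgroup B" and AB: "A \<subseteq> B"
    and L: "\<forall>j<k. Lj R w j B \<subseteq> Lj R w j A"
  shows "j \<le> k \<Longrightarrow> x \<in> B \<Longrightarrow> \<forall>i<j. c i \<in> R \<Longrightarrow> x = (\<Sum>i<j. c i * w i) \<Longrightarrow> x \<in> A"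
proof (induction j arbitrary: x c)
  case 0
  then show ?case using A by (simp add: add_subgroup_def)
next
  case (Suc j)
  have "c j \<in> Lj R w j B" unfolding Lj_def using Suc.prems
    by (auto intro!: exI[of _ c] simp: add.commute)
  then have "c j \<in> Lj R w j A" using L Suc.prems(1) by (meson Suc_le_lessD subsetD)
  then obtain d where d: "\<forall>i<j. d i \<in> R" "c j * w j + (\<Sum>i<j. d i * w i) \<in> A"
    unfolding Lj_def by blast
  define y where "y = c j * w j + (\<Sum>i<j. d i * w i)"
  have "x - y = (\<Sum>i<j. (c i + - d i) * w i)"
    using Suc.prems(4) unfolding y_def by (simp add: algebra_simps sum_subtractf)
  moreover have "x - y \<in> B" using B d AB Suc.prems(2) unfolding y_def add_subgroup_def
    by (metis diff_conv_add_uminus subsetD)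
  moreover have "\<forall>i<j. c i + - d i \<in> R" using Suc.prems(3) d(1) Radd Rneg by (metis less_SucI)
  ultimately have "x - y \<in> A" using Suc.IH Suc.prems(1) by auto
  then have "(x - y) + y \<in> A" using A d unfolding y_def add_subgroup_def by blast
  then show ?case by simp
qed

lemma acc_left_nat:
  fixes w :: "nat \<Rightarrow> 'a::ring_1"
  assumes R0: "0 \<in> R" and Radd: "\<forall>x\<in>R. \<forall>y\<in>R. x+y\<in>R" and Rneg: "\<forall>x\<in>R. -x\<in>R"
    and Rmul: "\<forall>x\<in>R. \<forall>y\<in>R. x*y\<in>R"
    and gen: "\<forall>x. \<exists>c. (\<forall>i<k. c i \<in> R) \<and> x = (\<Sum>i<k. c i * w i)"
    and noeth: "left_noetherian R"
  shows "left_noetherian (UNIV::'a::ring_1 set)"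
  unfolding left_noetherian_def
proof (intro allI impI)
  fix I :: "nat \<Rightarrow> 'a set"
  assume I: "\<forall>n. left_ideal_of UNIV (I n)" and ch: "\<forall>n. I n \<subseteq> I (Suc n)"
  have "\<exists>N. \<forall>n\<ge>N. Lj R w j (I n) = Lj R w j (I N)" for j
  proof -
    have H: "\<And>J. (\<forall>n. left_ideal_of R (J n)) \<Longrightarrow> (\<forall>n. J n \<subseteq> J (Suc n)) \<Longrightarrow> \<exists>N. \<forall>n\<ge>N. J n = J N"
      using noeth unfolding left_noetherian_def by blast
    have "\<forall>n. left_ideal_of R (Lj R w j (I n))"
      using Lj_ideal[OF R0 Radd Rneg Rmul] I by blast
    moreover have "\<forall>n. Lj R w j (I n) \<subseteq> Lj R w j (I (Suc n))"
      using ch Lj_mono by blast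
    ultimately show ?thesis by (rule H)
  qed
  then obtain N where N: "\<And>j n. n \<ge> N j \<Longrightarrow> Lj R w j (I n) = Lj R w j (I (N j))"
    by metis
  define M where "M = (\<Sum>j<k. N j)"
  have mono: "I a \<subseteq> I b" if "a \<le> b" for a b
    using lift_Suc_mono_le[of I, OF _ that] ch by blast
  have NM: "j < k \<Longrightarrow> N j \<le> M" for j
    unfolding M_def by (rule member_le_sum) auto
  show "\<exists>N. \<forall>n\<ge>N. I n = I N"
  proof (intro exI allI impI)
    fix n assume n: "M \<le> n"
    have L: "\<forall>j<k. Lj R w j (I n) \<subseteq> Lj R w j (I M)"
      using N NM n by (metis order.trans order.refl)
    have "I n \<subseteq> I M"
    proof
      fix x assume x: "x \<in> I n"
      obtain c where "\<forall>i<k. c i \<in> R" "x = (\<Sum>i<k. c i * w i)" using gen by blast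
      then show "x \<in> I M"
        using Lj_reflect[OF Radd Rneg _ _ mono[OF n] L, of k x c] I x
        unfolding left_ideal_of_def by auto
    qed
    then show "I n = I M" using mono[OF n] by auto
  qed
qed

definition Rj :: "'a::ring_1 set \<Rightarrow> (nat \<Rightarrow> 'a) \<Rightarrow> nat \<Rightarrow> 'a set \<Rightarrow> 'a set" where
  "Rj R w j I = {r\<in>R. \<exists>c. (\<forall>i<j. c i \<in> R) \<and> w j * r + (\<Sum>i<j. w i * c i) \<in> I}"

lemma Rj_mono: "I \<subseteq> J \<Longrightarrow> Rj R w j I \<subseteq> Rj R w j J"
  unfolding Rj_def by blast

lemma Rj_ideal:
  assumes R0: "0 \<in> R" and Radd: "\<forall>x\<in>R. \<forall>y\<in>R. x+y\<in>R" and Rneg: "\<forall>x\<in>R. -x\<in>R"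
    and Rmul: "\<forall>x\<in>R. \<forall>y\<in>R. x*y\<in>R"
    and I: "right_ideal_of UNIV I"
  shows "right_ideal_of R (Rj R w j I)"
proof -
  have I0: "0 \<in> I" and Iadd: "\<forall>x\<in>I. \<forall>y\<in>I. x+y\<in>I" and Ineg: "\<forall>x\<in>I. -x\<in>I"
    and Imul: "\<forall>r. \<forall>x\<in>I. x*r\<in>I"
    using I unfolding right_ideal_of_def add_subgroup_def by auto
  have a: "0 \<in> Rj R w j I" unfolding Rj_def
    using R0 I0 by (auto intro!: exI[of _ "\<lambda>_. 0"])
  have b: "x + y \<in> Rj R w j I" if hx: "x \<in> Rj R w j I" and hy: "y \<in> Rj R w j I" for x y
  proof -
    obtain c where c: "\<forall>i<j. c i \<in> R" "w j * x + (\<Sum>i<j. w i * c i) \<in> I" "x \<in> R"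
      using hx unfolding Rj_def by auto
    obtain d where d: "\<forall>i<j. d i \<in> R" "w j * y + (\<Sum>i<j. w i * d i) \<in> I" "y \<in> R"
      using hy unfolding Rj_def by auto
    have "w j * (x+y) + (\<Sum>i<j. w i * (c i + d i)) =
        (w j * x + (\<Sum>i<j. w i * c i)) + (w j * y + (\<Sum>i<j. w i * d i))"
      by (simp add: algebra_simps sum.distrib)
    then show ?thesis unfolding Rj_def using c d Radd Iadd
      by (auto intro!: exI[of _ "\<lambda>i. c i + d i"])
  qed
  have c: "- x \<in> Rj R w j I" if hx: "x \<in> Rj R w j I" for x
  proof -
    obtain c where c: "\<forall>i<j. c i \<in> R" "w j * x + (\<Sum>i<j. w i * c i) \<in> I" "x \<in> R"
      using hx unfolding Rj_def by auto
    have "w j * (-x) + (\<Sum>i<j. w i * (- c i)) = - (w j * x + (\<Sum>i<j. w i * c i))"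
      by (simp add: algebra_simps sum_negf)
    then have "w j * (-x) + (\<Sum>i<j. w i * (- c i)) \<in> I" using c Ineg by metis
    then show ?thesis unfolding Rj_def using c Rneg
      by (intro CollectI conjI exI[of _ "\<lambda>i. - c i"]) auto
  qed
  have d: "x * r \<in> Rj R w j I" if hr: "r \<in> R" and hx: "x \<in> Rj R w j I" for r x
  proof -
    obtain c where c: "\<forall>i<j. c i \<in> R" "w j * x + (\<Sum>i<j. w i * c i) \<in> I" "x \<in> R"
      using hx unfolding Rj_def by auto
    have "w j * (x*r) + (\<Sum>i<j. w i * (c i * r)) = (w j * x + (\<Sum>i<j. w i * c i)) * r"
      by (simp add: algebra_simps sum_distrib_right)
    then show ?thesis unfolding Rj_def using c Rmul Imul hr
      by (auto intro!: exI[of _ "\<lambda>i. c i * r"])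
  qed
  show ?thesis unfolding right_ideal_of_def add_subgroup_def
    using a b c d by (auto simp: Rj_def)
qed

lemma Rj_reflect:
  assumes Radd: "\<forall>x\<in>R. \<forall>y\<in>R. x+y\<in>R" and Rneg: "\<forall>x\<in>R. -x\<in>R"
    and A: "add_subgroup A" and B: "add_subgroup B" and AB: "A \<subseteq> B"
    and L: "\<forall>j<k. Rj R w j B \<subseteq> Rj R w j A"
  shows "j \<le> k \<Longrightarrow> x \<in> B \<Longrightarrow> \<forall>i<j. c i \<in> R \<Longrightarrow> x = (\<Sum>i<j. w i * c i) \<Longrightarrow> x \<in> A"
proof (induction j arbitrary: x c)
  case 0
  then show ?case using A by (simp add: add_subgroup_def)
next
  case (Suc j)
  have "c j \<in> Rj R w j B" unfolding Rj_def using Suc.prems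
    by (auto intro!: exI[of _ c] simp: add.commute)
  then have "c j \<in> Rj R w j A" using L Suc.prems(1) by (meson Suc_le_lessD subsetD)
  then obtain d where d: "\<forall>i<j. d i \<in> R" "w j * c j + (\<Sum>i<j. w i * d i) \<in> A"
    unfolding Rj_def by blast
  define y where "y = w j * c j + (\<Sum>i<j. w i * d i)"
  have "x - y = (\<Sum>i<j. w i * (c i + - d i))"
    using Suc.prems(4) unfolding y_def by (simp add: algebra_simps sum_subtractf)
  moreover have "x - y \<in> B" using B d AB Suc.prems(2) unfolding y_def add_subgroup_def
    by (metis diff_conv_add_uminus subsetD)
  moreover have "\<forall>i<j. c i + - d i \<in> R" using Suc.prems(3) d(1) Radd Rneg by (metis less_SucI)
  ultimately have "x - y \<in> A" using Suc.IH Suc.prems(1) by auto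
  then have "(x - y) + y \<in> A" using A d unfolding y_def add_subgroup_def by blast
  then show ?case by simp
qed

lemma acc_right_nat:
  fixes w :: "nat \<Rightarrow> 'a::ring_1"
  assumes R0: "0 \<in> R" and Radd: "\<forall>x\<in>R. \<forall>y\<in>R. x+y\<in>R" and Rneg: "\<forall>x\<in>R. -x\<in>R"
    and Rmul: "\<forall>x\<in>R. \<forall>y\<in>R. x*y\<in>R"
    and gen: "\<forall>x. \<exists>c. (\<forall>i<k. c i \<in> R) \<and> x = (\<Sum>i<k. w i * c i)"
    and noeth: "right_noetherian R"
  shows "right_noetherian (UNIV::'a::ring_1 set)"
  unfolding right_noetherian_def
proof (intro allI impI)
  fix I :: "nat \<Rightarrow> 'a set"
  assume I: "\<forall>n. right_ideal_of UNIV (I n)" and ch: "\<forall>n. I n \<subseteq> I (Suc n)"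
  have "\<exists>N. \<forall>n\<ge>N. Rj R w j (I n) = Rj R w j (I N)" for j
  proof -
    have H: "\<And>J. (\<forall>n. right_ideal_of R (J n)) \<Longrightarrow> (\<forall>n. J n \<subseteq> J (Suc n)) \<Longrightarrow> \<exists>N. \<forall>n\<ge>N. J n = J N"
      using noeth unfolding right_noetherian_def by blast
    have "\<forall>n. right_ideal_of R (Rj R w j (I n))"
      using Rj_ideal[OF R0 Radd Rneg Rmul] I by blast
    moreover have "\<forall>n. Rj R w j (I n) \<subseteq> Rj R w j (I (Suc n))"
      using ch Rj_mono by blast
    ultimately show ?thesis by (rule H)
  qed
  then obtain N where N: "\<And>j n. n \<ge> N j \<Longrightarrow> Rj R w j (I n) = Rj R w j (I (N j))"
    by metis
  define M where "M = (\<Sum>j<k. N j)"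
  have mono: "I a \<subseteq> I b" if "a \<le> b" for a b
    using lift_Suc_mono_le[of I, OF _ that] ch by blast
  have NM: "j < k \<Longrightarrow> N j \<le> M" for j
    unfolding M_def by (rule member_le_sum) auto
  show "\<exists>N. \<forall>n\<ge>N. I n = I N"
  proof (intro exI allI impI)
    fix n assume n: "M \<le> n"
    have L: "\<forall>j<k. Rj R w j (I n) \<subseteq> Rj R w j (I M)"
      using N NM n by (metis order.trans order.refl)
    have "I n \<subseteq> I M"
    proof
      fix x assume x: "x \<in> I n"
      obtain c where "\<forall>i<k. c i \<in> R" "x = (\<Sum>i<k. w i * c i)" using gen by blast
      then show "x \<in> I M"
        using Rj_reflect[OF Radd Rneg _ _ mono[OF n] L, of k x c] I x
        unfolding right_ideal_of_def by auto
    qed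
    then show "I n = I M" using mono[OF n] by auto
  qed
qed


lemma sum_T_to_nat:
  assumes "distinct ws"
  shows "(\<Sum>t\<in>set ws. h t) = (\<Sum>i<length ws. h (ws ! i))"
  using assms by (simp add: sum.distinct_set_conv_list sum_list_sum_nth atLeast0LessThan)

lemma acc_left_fin:
  fixes w :: "'t \<Rightarrow> 'a::ring_1"
  assumes R0: "0 \<in> R" and Radd: "\<forall>x\<in>R. \<forall>y\<in>R. x+y\<in>R" and Rneg: "\<forall>x\<in>R. -x\<in>R"
    and Rmul: "\<forall>x\<in>R. \<forall>y\<in>R. x*y\<in>R"
    and T: "finite T"
    and gen: "\<forall>x. \<exists>c. (\<forall>t\<in>T. c t \<in> R) \<and> x = (\<Sum>t\<in>T. c t * w t)"
    and noeth: "left_noetherian R"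
  shows "left_noetherian (UNIV::'a set)"
proof -
  obtain ws where ws: "set ws = T" "distinct ws" using finite_distinct_list[OF T] by blast
  have "\<forall>x. \<exists>c. (\<forall>i<length ws. c i \<in> R) \<and> x = (\<Sum>i<length ws. c i * (w (ws ! i)))"
  proof
    fix x
    obtain c where c: "\<forall>t\<in>T. c t \<in> R" "x = (\<Sum>t\<in>T. c t * w t)" using gen by blast
    show "\<exists>c. (\<forall>i<length ws. c i \<in> R) \<and> x = (\<Sum>i<length ws. c i * (w (ws ! i)))"
      using c ws sum_T_to_nat[OF ws(2), of "\<lambda>t. c t * w t"]
      by (intro exI[of _ "\<lambda>i. c (ws ! i)"]) auto
  qed
  then show ?thesis by (rule acc_left_nat[OF R0 Radd Rneg Rmul _ noeth])
qed

lemma acc_right_fin: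
  fixes w :: "'t \<Rightarrow> 'a::ring_1"
  assumes R0: "0 \<in> R" and Radd: "\<forall>x\<in>R. \<forall>y\<in>R. x+y\<in>R" and Rneg: "\<forall>x\<in>R. -x\<in>R"
    and Rmul: "\<forall>x\<in>R. \<forall>y\<in>R. x*y\<in>R"
    and T: "finite T"
    and gen: "\<forall>x. \<exists>c. (\<forall>t\<in>T. c t \<in> R) \<and> x = (\<Sum>t\<in>T. w t * c t)"
    and noeth: "right_noetherian R"
  shows "right_noetherian (UNIV::'a set)"
proof -
  obtain ws where ws: "set ws = T" "distinct ws" using finite_distinct_list[OF T] by blast
  have "\<forall>x. \<exists>c. (\<forall>i<length ws. c i \<in> R) \<and> x = (\<Sum>i<length ws. (w (ws ! i)) * c i)"
  proof
    fix x
    obtain c where c: "\<forall>t\<in>T. c t \<in> R" "x = (\<Sum>t\<in>T. w t * c t)" using gen by blast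
    show "\<exists>c. (\<forall>i<length ws. c i \<in> R) \<and> x = (\<Sum>i<length ws. (w (ws ! i)) * c i)"
      using c ws sum_T_to_nat[OF ws(2), of "\<lambda>t. w t * c t"]
      by (intro exI[of _ "\<lambda>i. c (ws ! i)"]) auto
  qed
  then show ?thesis by (rule acc_right_nat[OF R0 Radd Rneg Rmul _ noeth])
qed

lemma rsm_elim:
  assumes "x \<in> ring_set_mult A B"
  obtains n a b where "\<forall>i<n. a i \<in> A \<and> b i \<in> B" "x = (\<Sum>i<(n::nat). a i * b i)"
  using assms unfolding ring_set_mult_def by blast

lemma rsm_single: "a \<in> A \<Longrightarrow> b \<in> B \<Longrightarrow> a * b \<in> ring_set_mult A B"
  unfolding ring_set_mult_def
  by (rule CollectI, rule exI[of _ 1], rule exI[of _ "\<lambda>_. a"], rule exI[of _ "\<lambda>_. b"]) auto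

lemma rsm_left_unit:
  assumes "x \<in> ring_set_mult P C" and "\<forall>p\<in>P. e * p = p"
  shows "e * x = x"
proof -
  obtain n p c where pc: "\<forall>i<n. p i \<in> P \<and> c i \<in> C" "x = (\<Sum>i<(n::nat). p i * c i)"
    using rsm_elim[OF assms(1)] by blast
  have "e * x = (\<Sum>i<n. (e * p i) * c i)" unfolding pc(2)
    by (simp add: sum_distrib_left mult.assoc)
  also have "\<dots> = x" unfolding pc(2) using pc(1) assms(2) by (intro sum.cong) auto
  finally show ?thesis .
qed

lemma rsm_right_unit:
  assumes "x \<in> ring_set_mult (ring_set_mult A B) C" and "\<forall>b\<in>B. \<forall>c\<in>C. (b * c) * e = b * c"
  shows "x * e = x"
proof -
  have sub: "p * c * e = p * c" if hp: "p \<in> ring_set_mult A B" and hc: "c \<in> C" for p c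
  proof -
    obtain m a b where ab: "\<forall>i<m. a i \<in> A \<and> b i \<in> B" "p = (\<Sum>i<(m::nat). a i * b i)"
      using rsm_elim[OF hp] by blast
    have "p * c * e = (\<Sum>i<m. a i * ((b i * c) * e))" unfolding ab(2)
      by (simp add: sum_distrib_right mult.assoc)
    also have "\<dots> = (\<Sum>i<m. a i * (b i * c))" using ab(1) assms(2) hc
      by (intro sum.cong) auto
    also have "\<dots> = p * c" unfolding ab(2) by (simp add: sum_distrib_right mult.assoc)
    finally show ?thesis .
  qed
  obtain n p c where pc: "\<forall>i<n. p i \<in> ring_set_mult A B \<and> c i \<in> C" "x = (\<Sum>i<(n::nat). p i * c i)"
    using rsm_elim[OF assms(1)] by blast
  have "x * e = (\<Sum>i<n. p i * c i * e)" unfolding pc(2) by (simp add: sum_distrib_right)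
  also have "\<dots> = x" unfolding pc(2) using pc(1) sub by (intro sum.cong) auto
  finally show ?thesis .
qed


theorem proposition3p4:
  fixes G :: "('g, 'b) monoid_scheme" and S :: "'g \<Rightarrow> 'a::ring_1 set"
  assumes "group G" and "finite (carrier G)"
    and "epsilon_strongly_graded G S"
  shows "(left_noetherian (S \<one>\<^bsub>G\<^esub>) \<longrightarrow> left_noetherian (UNIV :: 'a set)) \<and>
         (right_noetherian (S \<one>\<^bsub>G\<^esub>) \<longrightarrow> right_noetherian (UNIV :: 'a set))"
proof -
  interpret G: group G by fact
  have fin: "finite (carrier G)" by fact
  have gr: "graded_ring G S"
    and eps2: "\<forall>g\<in>carrier G. ring_set_mult (ring_set_mult (S g) (S (inv\<^bsub>G\<^esub> g))) (S g) = S g"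
    and eps3: "\<forall>g\<in>carrier G. \<exists>\<epsilon>\<in>ring_set_mult (S g) (S (inv\<^bsub>G\<^esub> g)).
         \<forall>x\<in>ring_set_mult (S g) (S (inv\<^bsub>G\<^esub> g)). \<epsilon> * x = x \<and> x * \<epsilon> = x"
    using assms(3) unfolding epsilon_strongly_graded_def by auto
  have sub: "\<forall>g\<in>carrier G. add_subgroup (S g)"
    and mul: "\<forall>g\<in>carrier G. \<forall>h\<in>carrier G. \<forall>x\<in>S g. \<forall>y\<in>S h. x * y \<in> S (g \<otimes>\<^bsub>G\<^esub> h)"
    and dec: "\<forall>x::'a. \<exists>!f::'g \<Rightarrow> 'a. (\<forall>g. g \<notin> carrier G \<longrightarrow> f g = 0) \<and>
                         finite {g. f g \<noteq> 0} \<and>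
                         (\<forall>g\<in>carrier G. f g \<in> S g) \<and>
                         x = (\<Sum>g\<in>{g. f g \<noteq> 0}. f g)"
    using gr unfolding graded_ring_def by auto
  define R where "R = S \<one>\<^bsub>G\<^esub>"
  have R0: "0 \<in> R" and Radd: "\<forall>x\<in>R. \<forall>y\<in>R. x+y\<in>R" and Rneg: "\<forall>x\<in>R. -x\<in>R"
    using sub unfolding R_def add_subgroup_def by auto
  have Rmul: "\<forall>x\<in>R. \<forall>y\<in>R. x*y\<in>R"
    using mul unfolding R_def by (metis G.one_closed G.l_one)
  have decomp: "\<exists>f. (\<forall>g\<in>carrier G. f g \<in> S g) \<and> x = (\<Sum>g\<in>carrier G. f g)" for x
  proof -
    obtain f where f: "\<forall>g. g \<notin> carrier G \<longrightarrow> f g = 0" "\<forall>g\<in>carrier G. f g \<in> S g"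
      "x = (\<Sum>g\<in>{g. f g \<noteq> 0}. f g)"
      using dec by blast
    have "(\<Sum>g\<in>{g. f g \<noteq> 0}. f g) = (\<Sum>g\<in>carrier G. f g)"
      using f(1) fin by (intro sum.mono_neutral_left) auto
    then show ?thesis using f by blast
  qed
  have left: "left_noetherian (UNIV :: 'a set)" if noeth: "left_noetherian R"
  proof -
    have "\<forall>g\<in>carrier G. \<exists>n a b. (\<forall>i<(n::nat). b i \<in> S (inv\<^bsub>G\<^esub> g) \<and> a i \<in> S g) \<and>
            (\<forall>s\<in>S g. s = (\<Sum>i<n. (s * b i) * a i))"
    proof
      fix g assume g: "g \<in> carrier G"
      define g' where "g' = inv\<^bsub>G\<^esub> g"
      have g': "g' \<in> carrier G" "inv\<^bsub>G\<^esub> g' = g" using g unfolding g'_def by auto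
      obtain \<epsilon> where e1: "\<epsilon> \<in> ring_set_mult (S g') (S g)"
        and e2: "\<forall>x\<in>ring_set_mult (S g') (S g). \<epsilon> * x = x \<and> x * \<epsilon> = x"
        using eps3 g' by metis
      obtain n b a where ba: "\<forall>i<n. b i \<in> S g' \<and> a i \<in> S g" "\<epsilon> = (\<Sum>i<(n::nat). b i * a i)"
        using rsm_elim[OF e1] by blast
      have "s = (\<Sum>i<n. (s * b i) * a i)" if s: "s \<in> S g" for s
      proof -
        have "s \<in> ring_set_mult (ring_set_mult (S g) (S g')) (S g)"
          using eps2 g s unfolding g'_def by auto
        moreover have "\<forall>b\<in>S g'. \<forall>c\<in>S g. (b * c) * \<epsilon> = b * c"
          using e2 rsm_single by blast
        ultimately have "s * \<epsilon> = s" by (rule rsm_right_unit)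
        then show ?thesis unfolding ba(2) by (simp add: sum_distrib_left mult.assoc)
      qed
      then show "\<exists>n a b. (\<forall>i<(n::nat). b i \<in> S (inv\<^bsub>G\<^esub> g) \<and> a i \<in> S g) \<and>
            (\<forall>s\<in>S g. s = (\<Sum>i<n. (s * b i) * a i))"
        using ba(1) unfolding g'_def by blast
    qed
    then obtain n a b where nab: "\<forall>g\<in>carrier G. (\<forall>i<(n g::nat). b g i \<in> S (inv\<^bsub>G\<^esub> g) \<and> a g i \<in> S g) \<and>
            (\<forall>s\<in>S g. s = (\<Sum>i<n g. (s * b g i) * a g i))"
      by metis
    define T where "T = Sigma (carrier G) (\<lambda>g. {..<n g})"
    have T: "finite T" unfolding T_def using fin by auto
    have "\<forall>x. \<exists>c. (\<forall>t\<in>T. c t \<in> R) \<and> x = (\<Sum>t\<in>T. c t * (\<lambda>(g,i). a g i) t)"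
    proof
      fix x
      obtain f where f: "\<forall>g\<in>carrier G. f g \<in> S g" "x = (\<Sum>g\<in>carrier G. f g)" using decomp by blast
      have cR: "\<forall>t\<in>T. (\<lambda>(g,i). f g * b g i) t \<in> R"
      proof
        fix t assume "t \<in> T"
        then obtain g i where t: "t = (g,i)" "g \<in> carrier G" "i < n g" unfolding T_def by auto
        have "f g * b g i \<in> S (g \<otimes>\<^bsub>G\<^esub> inv\<^bsub>G\<^esub> g)"
          using mul t f nab by (meson G.inv_closed)
        then show "(\<lambda>(g,i). f g * b g i) t \<in> R" using t unfolding R_def by simp
      qed
      have "x = (\<Sum>g\<in>carrier G. \<Sum>i<n g. (f g * b g i) * a g i)"
        unfolding f(2) using f(1) nab by (intro sum.cong) auto
      also have "\<dots> = (\<Sum>t\<in>T. (\<lambda>(g,i). f g * b g i) t * (\<lambda>(g,i). a g i) t)"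
        unfolding T_def using fin by (subst sum.Sigma) (auto simp: case_prod_beta)
      finally show "\<exists>c. (\<forall>t\<in>T. c t \<in> R) \<and> x = (\<Sum>t\<in>T. c t * (\<lambda>(g,i). a g i) t)"
        using cR by blast
    qed
    then show ?thesis by (rule acc_left_fin[OF R0 Radd Rneg Rmul T _ noeth])
  qed
  have right: "right_noetherian (UNIV :: 'a set)" if noeth: "right_noetherian R"
  proof -
    have "\<forall>g\<in>carrier G. \<exists>n a b. (\<forall>i<(n::nat). b i \<in> S (inv\<^bsub>G\<^esub> g) \<and> a i \<in> S g) \<and>
            (\<forall>s\<in>S g. s = (\<Sum>i<n. a i * (b i * s)))"
    proof
      fix g assume g: "g \<in> carrier G"
      define g' where "g' = inv\<^bsub>G\<^esub> g"
      obtain \<epsilon> where e1: "\<epsilon> \<in> ring_set_mult (S g) (S g')"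
        and e2: "\<forall>x\<in>ring_set_mult (S g) (S g'). \<epsilon> * x = x \<and> x * \<epsilon> = x"
        using eps3 g unfolding g'_def by metis
      obtain n b a where ba: "\<forall>i<n. a i \<in> S g \<and> b i \<in> S g'" "\<epsilon> = (\<Sum>i<(n::nat). a i * b i)"
        using rsm_elim[OF e1] by blast
      have "s = (\<Sum>i<n. a i * (b i * s))" if s: "s \<in> S g" for s
      proof -
        have "s \<in> ring_set_mult (ring_set_mult (S g) (S g')) (S g)"
          using eps2 g s unfolding g'_def by auto
        moreover have "\<forall>p\<in>ring_set_mult (S g) (S g'). \<epsilon> * p = p"
          using e2 by blast
        ultimately have "\<epsilon> * s = s" by (rule rsm_left_unit)
        then show ?thesis unfolding ba(2) by (simp add: sum_distrib_right mult.assoc)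
      qed
      then show "\<exists>n a b. (\<forall>i<(n::nat). b i \<in> S (inv\<^bsub>G\<^esub> g) \<and> a i \<in> S g) \<and>
            (\<forall>s\<in>S g. s = (\<Sum>i<n. a i * (b i * s)))"
        using ba(1) unfolding g'_def by blast
    qed
    then obtain n a b where nab: "\<forall>g\<in>carrier G. (\<forall>i<(n g::nat). b g i \<in> S (inv\<^bsub>G\<^esub> g) \<and> a g i \<in> S g) \<and>
            (\<forall>s\<in>S g. s = (\<Sum>i<n g. a g i * (b g i * s)))"
      by metis
    define T where "T = Sigma (carrier G) (\<lambda>g. {..<n g})"
    have T: "finite T" unfolding T_def using fin by auto
    have "\<forall>x. \<exists>c. (\<forall>t\<in>T. c t \<in> R) \<and> x = (\<Sum>t\<in>T. (\<lambda>(g,i). a g i) t * c t)"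
    proof
      fix x
      obtain f where f: "\<forall>g\<in>carrier G. f g \<in> S g" "x = (\<Sum>g\<in>carrier G. f g)" using decomp by blast
      have cR: "\<forall>t\<in>T. (\<lambda>(g,i). b g i * f g) t \<in> R"
      proof
        fix t assume "t \<in> T"
        then obtain g i where t: "t = (g,i)" "g \<in> carrier G" "i < n g" unfolding T_def by auto
        have "b g i * f g \<in> S (inv\<^bsub>G\<^esub> g \<otimes>\<^bsub>G\<^esub> g)"
          using mul t f nab by (meson G.inv_closed)
        then show "(\<lambda>(g,i). b g i * f g) t \<in> R" using t unfolding R_def by simp
      qed
      have "x = (\<Sum>g\<in>carrier G. \<Sum>i<n g. a g i * (b g i * f g))"
        unfolding f(2) using f(1) nab by (intro sum.cong) auto
      also have "\<dots> = (\<Sum>t\<in>T. (\<lambda>(g,i). a g i) t * (\<lambda>(g,i). b g i * f g) t)"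
        unfolding T_def using fin by (subst sum.Sigma) (auto simp: case_prod_beta)
      finally show "\<exists>c. (\<forall>t\<in>T. c t \<in> R) \<and> x = (\<Sum>t\<in>T. (\<lambda>(g,i). a g i) t * c t)"
        using cR by blast
    qed
    then show ?thesis by (rule acc_right_fin[OF R0 Radd Rneg Rmul T _ noeth])
  qed
  show ?thesis using left right unfolding R_def by blast
qed

end
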